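(* Let $F$ be a field and let $V$ be an $F$-vector space of dimension $2m$. If $F$ admits a field extension of degree $m$, then there exists an $m$-dimensional symplectic subspace $K \subset \mathcal{A}(V)$.
   Context: $\mathcal{A}(V)$ denotes the $F$-vector space of alternating bilinear forms on $V$, i.e. bilinear maps $b: V \times V \to F$ with $b(v,v)=0$ for all $v$. A subspace $K \subseteq \mathcal{A}(V)$ is called symplectic if every nonzero element of $K$ is non-degenerate as a bilinear form on $V$. *)

theory Defs
  imports Complex_Main "HOL-Library.Function_Algebras"
begin

definition has_dim :: "('a::field \<Rightarrow> 'b::ab_group_add \<Rightarrow> 'b) \<Rightarrow> 'b set \<Rightarrow> nat \<Rightarrow> bool" where
  "has_dim s S n \<longleftrightarrow> (\<exists>B. finite B \<and> card B = n \<and> \<not> module.dependent s B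
                              \<and> module.span s B = S)"

definition alt_bilinear :: "('a::field \<Rightarrow> 'v::ab_group_add \<Rightarrow> 'v) \<Rightarrow> ('v \<Rightarrow> 'v \<Rightarrow> 'a) \<Rightarrow> bool" where
  "alt_bilinear s b \<longleftrightarrow> (\<forall>x. Vector_Spaces.linear s (*) (b x))
                       \<and> (\<forall>y. Vector_Spaces.linear s (*) (\<lambda>x. b x y))
                       \<and> (\<forall>v. b v v = 0)"

definition altforms :: "('a::field \<Rightarrow> 'v::ab_group_add \<Rightarrow> 'v) \<Rightarrow> ('v \<Rightarrow> 'v \<Rightarrow> 'a) set" where
  "altforms s = {b. alt_bilinear s b}"

definition form_scale :: "'a::field \<Rightarrow> ('v \<Rightarrow> 'v \<Rightarrow> 'a) \<Rightarrow> ('v \<Rightarrow> 'v \<Rightarrow> 'a)" where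
  "form_scale c b = (\<lambda>x y. c * b x y)"

definition nondegenerate :: "('v::zero \<Rightarrow> 'v \<Rightarrow> 'a::zero) \<Rightarrow> bool" where
  "nondegenerate b \<longleftrightarrow> (\<forall>x. (\<forall>y. b x y = 0) \<longrightarrow> x = 0)"

definition symplectic :: "('v::zero \<Rightarrow> 'v \<Rightarrow> 'a::zero) set \<Rightarrow> bool" where
  "symplectic K \<longleftrightarrow> (\<forall>b\<in>K. b \<noteq> 0 \<longrightarrow> nondegenerate b)"

definition field_hom :: "('a::field \<Rightarrow> 'e::field) \<Rightarrow> bool" where
  "field_hom i \<longleftrightarrow> i 1 = 1 \<and> (\<forall>x y. i (x + y) = i x + i y) \<and> (\<forall>x y. i (x * y) = i x * i y)"

end

theory Submission
  imports Defs
begin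

lemma linI: "vector_space s1 \<Longrightarrow> vector_space s2 \<Longrightarrow> (\<And>x y. f (x+y) = f x + f y)
  \<Longrightarrow> (\<And>c x. f (s1 c x) = s2 c (f x)) \<Longrightarrow> Vector_Spaces.linear s1 s2 f"
  by (simp add: Vector_Spaces.linear_iff)

lemma lin_add: "Vector_Spaces.linear s1 s2 f \<Longrightarrow> f (x+y) = f x + f y"
  by (simp add: Vector_Spaces.linear_iff)

lemma lin_scale: "Vector_Spaces.linear s1 s2 f \<Longrightarrow> f (s1 c x) = s2 c (f x)"
  by (simp add: Vector_Spaces.linear_iff)

lemma lin_zero: "Vector_Spaces.linear s1 s2 f \<Longrightarrow> f 0 = 0"
  using lin_add[of s1 s2 f 0 0] by simp

lemma lin_diff: "Vector_Spaces.linear s1 s2 f \<Longrightarrow> f (x - y) = f x - f y"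
  using lin_add[of s1 s2 f "x - y" y] by (simp add: algebra_simps)

lemma lin_id: "vector_space s \<Longrightarrow> Vector_Spaces.linear s s id"
  by (rule linI) auto

lemma vs_mult: "vector_space ((*) :: 'a::field \<Rightarrow> _)"
  by (simp add: vector_space_def algebra_simps)

lemma vs_ext: "field_hom i \<Longrightarrow> vector_space (\<lambda>c x. i c * x)"
  by (simp add: vector_space_def field_hom_def algebra_simps)

lemma vs_form: "vector_space (form_scale :: 'a::field \<Rightarrow> ('v \<Rightarrow> 'v \<Rightarrow> 'a) \<Rightarrow> _)"
  by (simp add: vector_space_def form_scale_def fun_eq_iff algebra_simps)

theorem lemma2p3:
  fixes s :: "'a::field \<Rightarrow> 'v::ab_group_add \<Rightarrow> 'v"
    and m :: nat
    and i :: "'a \<Rightarrow> 'e::field"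
  assumes V: "vector_space s"
    and dimV: "has_dim s UNIV (2 * m)"
    and ext: "field_hom i"
    and deg: "has_dim (\<lambda>c x. i c * x) UNIV m"
  shows "\<exists>K. K \<subseteq> altforms s \<and> module.subspace form_scale K
             \<and> has_dim form_scale K m \<and> symplectic K"
proof -
  define sE where "sE = (\<lambda>c (x::'e). i c * x)"
  have vE: "vector_space sE" unfolding sE_def using vs_ext[OF ext] .
  have vF: "vector_space ((*) :: 'a \<Rightarrow> _)" by (rule vs_mult)
  have vK: "vector_space (form_scale :: 'a \<Rightarrow> ('v \<Rightarrow> 'v \<Rightarrow> 'a) \<Rightarrow> _)" by (rule vs_form)
  have i0: "i 0 = 0" using ext unfolding field_hom_def
    by (metis add_cancel_left_right add_0)
  interpret VE: vector_space_pair s sE using V vE by (simp add: vector_space_pair_def)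
  interpret EV: vector_space_pair sE s using V vE by (simp add: vector_space_pair_def)
  interpret EE: vector_space_pair sE sE using vE by (simp add: vector_space_pair_def)
  interpret VV: vector_space_pair s s using V by (simp add: vector_space_pair_def)
  interpret EF: vector_space_pair sE "(*) :: 'a \<Rightarrow> _" using vE vF by (simp add: vector_space_pair_def)
  interpret EK: vector_space_pair sE "form_scale :: 'a \<Rightarrow> ('v \<Rightarrow> 'v \<Rightarrow> 'a) \<Rightarrow> _"
    using vE vK by (simp add: vector_space_pair_def)
  obtain BE where BE: "finite BE" "card BE = m" "\<not> module.dependent sE BE" "module.span sE BE = UNIV"
    using deg unfolding has_dim_def sE_def by blast
  obtain BV where BV: "finite BV" "card BV = 2*m" "\<not> module.dependent s BV" "module.span s BV = UNIV"
    using dimV unfolding has_dim_def by blast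
  have "BE \<noteq> {}"
  proof
    assume "BE = {}"
    then have "(1::'e) \<in> module.span sE {}" using BE(4) by simp
    then show False by simp
  qed
  then obtain e0 where e0: "e0 \<in> BE" by blast
  have "card (BE \<times> (UNIV::bool set)) = card BV" using BE BV by (simp add: card_cartesian_product)
  then obtain f where f: "bij_betw f (BE \<times> (UNIV::bool set)) BV"
    using BE(1) BV(1) by (metis bij_betw_iff_card finite_SigmaI finite_code)
  define g where "g = the_inv_into (BE \<times> (UNIV::bool set)) f"
  have gf: "g (f p) = p" if "p \<in> BE \<times> UNIV" for p
    unfolding g_def using f that by (simp add: bij_betw_def the_inv_into_f_f)
  have fg: "f (g v) = v" "g v \<in> BE \<times> UNIV" if "v \<in> BV" for v
    unfolding g_def using f that
    by (auto simp: bij_betw_def f_the_inv_into_f the_inv_into_into)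
  have fin: "f (e, t) \<in> BV" if "e \<in> BE" for e t using f that by (auto simp: bij_betw_def)
  define p1 where "p1 = VE.construct BV (\<lambda>v. if snd (g v) then fst (g v) else 0)"
  define p2 where "p2 = VE.construct BV (\<lambda>v. if snd (g v) then 0 else fst (g v))"
  define q1 where "q1 = EV.construct BE (\<lambda>e. f (e, True))"
  define q2 where "q2 = EV.construct BE (\<lambda>e. f (e, False))"
  define \<tau> where "\<tau> = EF.construct BE (\<lambda>e. if e = e0 then 1 else 0)"
  have lp1: "Vector_Spaces.linear s sE p1" unfolding p1_def using BV(3) by (rule VE.linear_construct)
  have lp2: "Vector_Spaces.linear s sE p2" unfolding p2_def using BV(3) by (rule VE.linear_construct)
  have lq1: "Vector_Spaces.linear sE s q1" unfolding q1_def using BE(3) by (rule EV.linear_construct)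
  have lq2: "Vector_Spaces.linear sE s q2" unfolding q2_def using BE(3) by (rule EV.linear_construct)
  have l\<tau>: "Vector_Spaces.linear sE (*) \<tau>" unfolding \<tau>_def using BE(3) by (rule EF.linear_construct)
  have \<tau>e0: "\<tau> e0 = 1" unfolding \<tau>_def using BE(3) e0 by (simp add: EF.construct_basis)
  have q1b: "q1 b = f (b, True)" if "b \<in> BE" for b
    unfolding q1_def using BE(3) that by (simp add: EV.construct_basis)
  have q2b: "q2 b = f (b, False)" if "b \<in> BE" for b
    unfolding q2_def using BE(3) that by (simp add: EV.construct_basis)
  have p1b: "p1 v = (if snd (g v) then fst (g v) else 0)" if "v \<in> BV" for v
    unfolding p1_def using BV(3) that by (simp add: VE.construct_basis)
  have p2b: "p2 v = (if snd (g v) then 0 else fst (g v))" if "v \<in> BV" for v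
    unfolding p2_def using BV(3) that by (simp add: VE.construct_basis)
  have eqE: "h e = h' e" if "Vector_Spaces.linear sE sE h" "Vector_Spaces.linear sE sE h'"
    "\<And>b. b \<in> BE \<Longrightarrow> h b = h' b" for h h' e
    using EE.linear_eq_on[OF that(1,2), of e BE] that(3) BE(4) by auto
  have l0: "Vector_Spaces.linear sE sE (\<lambda>_. 0)" by (rule linI[OF vE vE]) (auto simp: sE_def)
  have p1q1: "p1 (q1 e) = e" for e
    using eqE[OF Vector_Spaces.linear_compose[OF lq1 lp1] lin_id[OF vE], of e]
    using q1b p1b fin gf by auto
  have p2q2: "p2 (q2 e) = e" for e
    using eqE[OF Vector_Spaces.linear_compose[OF lq2 lp2] lin_id[OF vE], of e]
    using q2b p2b fin gf by auto
  have p1q2: "p1 (q2 e) = 0" for e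
    using eqE[OF Vector_Spaces.linear_compose[OF lq2 lp1] l0, of e]
    using q2b p1b fin gf by auto
  have p2q1: "p2 (q1 e) = 0" for e
    using eqE[OF Vector_Spaces.linear_compose[OF lq1 lp2] l0, of e]
    using q1b p2b fin gf by auto
  have lqp: "Vector_Spaces.linear s s (\<lambda>v. q1 (p1 v) + q2 (p2 v))"
    by (rule linI[OF V V]) (simp_all add: lin_add[OF lq1] lin_add[OF lq2] lin_add[OF lp1]
        lin_add[OF lp2] lin_scale[OF lq1] lin_scale[OF lq2] lin_scale[OF lp1] lin_scale[OF lp2]
        vector_space.vector_space_assms(1)[OF V])
  have qp: "q1 (p1 v) + q2 (p2 v) = v" for v
  proof -
    have "\<And>b. b \<in> BV \<Longrightarrow> q1 (p1 b) + q2 (p2 b) = id b"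
    proof -
      fix b assume b: "b \<in> BV"
      obtain e t where et: "g b = (e, t)" by fastforce
      with fg[OF b] have e: "e \<in> BE" "f (e,t) = b" by auto
      show "q1 (p1 b) + q2 (p2 b) = id b"
        using b et e p1b p2b q1b q2b lin_zero[OF lq1] lin_zero[OF lq2] by (cases t) auto
    qed
    then show ?thesis using VV.linear_eq_on[OF lqp lin_id[OF V], of v BV] BV(4) by auto
  qed
  have \<tau>sc: "\<tau> (i c * z) = c * \<tau> z" for c z using lin_scale[OF l\<tau>, of c z] by (simp add: sE_def)
  have \<tau>add: "\<tau> (a + b) = \<tau> a + \<tau> b" for a b using lin_add[OF l\<tau>] .
  have \<tau>diff: "\<tau> (a - b) = \<tau> a - \<tau> b" for a b using lin_diff[OF l\<tau>] .
  have p1sc: "p1 (s c x) = i c * p1 x" for c x using lin_scale[OF lp1] by (simp add: sE_def)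
  have p2sc: "p2 (s c x) = i c * p2 x" for c x using lin_scale[OF lp2] by (simp add: sE_def)
  have p1add: "p1 (x + y) = p1 x + p1 y" for x y using lin_add[OF lp1] .
  have p2add: "p2 (x + y) = p2 x + p2 y" for x y using lin_add[OF lp2] .
  define L where "L = (\<lambda>(l::'e) (x::'v) (y::'v). \<tau> (l * (p1 x * p2 y - p2 x * p1 y)))"
  have alt: "L l \<in> altforms s" for l
  proof -
    have "Vector_Spaces.linear s (*) (L l x)" for x
      by (rule linI[OF V vF]) (simp_all add: L_def p1add p2add p1sc p2sc algebra_simps
          flip: \<tau>add \<tau>sc)
    moreover have "Vector_Spaces.linear s (*) (\<lambda>x. L l x y)" for y
      by (rule linI[OF V vF]) (simp_all add: L_def p1add p2add p1sc p2sc algebra_simps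
          flip: \<tau>add \<tau>sc)
    moreover have "L l v v = 0" for v
      by (simp add: L_def lin_zero[OF l\<tau>])
    ultimately show ?thesis by (simp add: altforms_def alt_bilinear_def)
  qed
  have lL: "Vector_Spaces.linear sE form_scale L"
    by (rule linI[OF vE vK]) (simp_all add: L_def fun_eq_iff form_scale_def sE_def algebra_simps
          flip: \<tau>add \<tau>sc)
  have nd: "nondegenerate (L l)" if l: "l \<noteq> 0" for l
    unfolding nondegenerate_def
  proof (intro allI impI)
    fix x assume H: "\<forall>y. L l x y = 0"
    show "x = 0"
    proof (rule ccontr)
      assume x: "x \<noteq> 0"
      have "p1 x \<noteq> 0 \<or> p2 x \<noteq> 0"
        using qp[of x] x lin_zero[OF lq1] lin_zero[OF lq2] by auto
      then show False
      proof
        assume a: "p1 x \<noteq> 0"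
        have "L l x (q2 (e0 / (l * p1 x))) = \<tau> e0"
          using a l by (simp add: L_def p1q2 p2q2)
        then show False using H \<tau>e0 by simp
      next
        assume a: "p2 x \<noteq> 0"
        have "L l x (q1 (- (e0 / (l * p2 x)))) = \<tau> e0"
          using a l by (simp add: L_def p1q1 p2q1)
        then show False using H \<tau>e0 by simp
      qed
    qed
  qed
  have injL: "L l = 0 \<Longrightarrow> l = 0" for l
  proof (rule ccontr)
    assume L0: "L l = 0" and l: "l \<noteq> 0"
    have "q1 1 \<noteq> 0" using p1q1[of 1] lin_zero[OF lp1] by auto
    then obtain y where "L l (q1 1) y \<noteq> 0" using nd[OF l] unfolding nondegenerate_def by blast
    then show False using L0 by simp
  qed
  have injL': "inj L" using EK.linear_inj_iff_eq_0[OF lL] injL by blast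
  define K where "K = range L"
  have "K \<subseteq> altforms s" unfolding K_def using alt by blast
  moreover have "module.subspace form_scale K"
    unfolding K_def by (rule EK.linear_subspace_image[OF lL module.subspace_UNIV[OF vE[folded module_iff_vector_space]]])
  moreover have "has_dim form_scale K m"
    unfolding has_dim_def
  proof (intro exI conjI)
    show "finite (L ` BE)" using BE(1) by simp
    show "card (L ` BE) = m" using BE(2) card_image[OF inj_on_subset[OF injL' subset_UNIV]] by simp
    show "\<not> module.dependent form_scale (L ` BE)"
      using EK.linear_independent_injective_image[OF lL BE(3)] injL' inj_on_subset by blast
    show "module.span form_scale (L ` BE) = K"
      unfolding K_def using EK.linear_span_image[OF lL, of BE] BE(4) by simp
  qed
  moreover have "symplectic K"
    unfolding symplectic_def K_def
  proof (intro ballI impI)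
    fix b assume "b \<in> range L" "b \<noteq> 0"
    then obtain l where "b = L l" "l \<noteq> 0" using lin_zero[OF lL] by auto
    then show "nondegenerate b" using nd by simp
  qed
  ultimately show ?thesis by blast
qed

end
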